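(* Let $f=\frac1n\sum_{i=1}^n f_i$ where each $f_i:\mathbb{R}^d\to\mathbb{R}$ is $L$-smooth, and assume moreover that either each $f_i$ is $\mu$-strongly convex for some $\mu>0$, or $\inf_x f(x)>-\infty$. Then the iterates of No Full Grad SARAH (described in the context) satisfy, for every epoch $s$, $$\Big\|\nabla f(x_s^0)-\frac1{n+1}\sum_{t=0}^{n}v_s^t\Big\|^2\le 2\|\nabla f(x_s^0)-v_s\|^2+\frac{2L^2}{n+1}\sum_{t=1}^{n}\|x_s^t-x_s^{t-1}\|^2.$$
   Context: No Full Grad SARAH: input $x_0^0\in\mathbb{R}^d$, $v_0=0$, stepsize $\gamma>0$. For epochs $s=0,1,\dots$: choose a permutation $\pi_s^1,\dots,\pi_s^n$ of $\{1,\dots,n\}$ (by any shuffling rule); set $\tilde v_s^1=0$, $v_s^0=v_s$, $x_s^1=x_s^0-\gamma v_s^0$; for $t=1,\dots,n$ set $\tilde v_s^{t+1}=\frac{t-1}{t}\tilde v_s^t+\frac1t\nabla f_{\pi_s^t}(x_s^t)$, $v_s^t=\frac1n\big(\nabla f_{\pi_s^t}(x_s^t)-\nabla f_{\pi_s^t}(x_s^{t-1})\big)+v_s^{t-1}$, $x_s^{t+1}=x_s^t-\gamma v_s^t$; then $x_{s+1}^0=x_s^{n+1}$, $v_{s+1}=\tilde v_s^{n+1}$. *)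

theory Defs
  imports "HOL-Analysis.Analysis"
begin

text \<open>Gradients are passed explicitly: \<open>G i x\<close> is the gradient of \<open>f i\<close> at \<open>x\<close>,
  linked to \<open>f i\<close> by a has_derivative hypothesis in the theorem.\<close>

definition L_smooth :: "('a::euclidean_space \<Rightarrow> real) \<Rightarrow> ('a \<Rightarrow> 'a) \<Rightarrow> real \<Rightarrow> bool" where
  "L_smooth f g L \<longleftrightarrow>
     (\<forall>x. (f has_derivative (\<lambda>h. g x \<bullet> h)) (at x)) \<and>
     (\<forall>x y. norm (g x - g y) \<le> L * norm (x - y))"

definition strongly_convex :: "real \<Rightarrow> ('a::euclidean_space \<Rightarrow> real) \<Rightarrow> bool" where
  "strongly_convex \<mu> f \<longleftrightarrow>
     (\<forall>x y \<theta>. 0 \<le> \<theta> \<and> \<theta> \<le> 1 \<longrightarrow>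
        f (\<theta> *\<^sub>R x + (1 - \<theta>) *\<^sub>R y)
          \<le> \<theta> * f x + (1 - \<theta>) * f y - \<mu> / 2 * \<theta> * (1 - \<theta>) * (norm (x - y))\<^sup>2)"

text \<open>Inner loop of one epoch of No Full Grad SARAH.
  \<open>sarah_xv G n \<gamma> p x0 v t = (x^t, v^t)\<close> for the epoch with start point \<open>x0 = x_s^0\<close>,
  \<open>v = v_s\<close> and permutation \<open>p = \<pi>_s\<close> (\<open>p t = \<pi>_s^t\<close>, 1-based).
  The first component at \<open>t = n+1\<close> is \<open>x_s^{n+1}\<close>.\<close>
fun sarah_xv :: "(nat \<Rightarrow> 'a::euclidean_space \<Rightarrow> 'a) \<Rightarrow> nat \<Rightarrow> real \<Rightarrow> (nat \<Rightarrow> nat)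
                   \<Rightarrow> 'a \<Rightarrow> 'a \<Rightarrow> nat \<Rightarrow> 'a \<times> 'a" where
  "sarah_xv G n \<gamma> p x0 v 0 = (x0, v)"
| "sarah_xv G n \<gamma> p x0 v (Suc t) =
     (let xt = fst (sarah_xv G n \<gamma> p x0 v t);
          vt = snd (sarah_xv G n \<gamma> p x0 v t);
          xt1 = xt - \<gamma> *\<^sub>R vt
      in (xt1, (1 / real n) *\<^sub>R (G (p (Suc t)) xt1 - G (p (Suc t)) xt) + vt))"

text \<open>\<open>sarah_vtil G n \<gamma> p x0 v t = \<tilde>v_s^t\<close> for \<open>t \<ge> 1\<close>: \<open>\<tilde>v^1 = 0\<close>,
  \<open>\<tilde>v^{t+1} = (t-1)/t \<tilde>v^t + 1/t \<nabla>f_{\<pi>^t}(x^t)\<close>. (Value at 0 is unused.)\<close>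
fun sarah_vtil :: "(nat \<Rightarrow> 'a::euclidean_space \<Rightarrow> 'a) \<Rightarrow> nat \<Rightarrow> real \<Rightarrow> (nat \<Rightarrow> nat)
                   \<Rightarrow> 'a \<Rightarrow> 'a \<Rightarrow> nat \<Rightarrow> 'a" where
  "sarah_vtil G n \<gamma> p x0 v 0 = 0"
| "sarah_vtil G n \<gamma> p x0 v (Suc t) =
     (if t = 0 then 0
      else ((real t - 1) / real t) *\<^sub>R sarah_vtil G n \<gamma> p x0 v t
           + (1 / real t) *\<^sub>R G (p t) (fst (sarah_xv G n \<gamma> p x0 v t)))"

text \<open>Outer loop: \<open>sarah_start G n \<gamma> \<pi> x00 s = (x_s^0, v_s)\<close>, with \<open>v_0 = 0\<close>.\<close>
fun sarah_start :: "(nat \<Rightarrow> 'a::euclidean_space \<Rightarrow> 'a) \<Rightarrow> nat \<Rightarrow> real \<Rightarrow> (nat \<Rightarrow> nat \<Rightarrow> nat)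
                   \<Rightarrow> 'a \<Rightarrow> nat \<Rightarrow> 'a \<times> 'a" where
  "sarah_start G n \<gamma> \<pi> x00 0 = (x00, 0)"
| "sarah_start G n \<gamma> \<pi> x00 (Suc s) =
     (let x0 = fst (sarah_start G n \<gamma> \<pi> x00 s);
          v = snd (sarah_start G n \<gamma> \<pi> x00 s)
      in (fst (sarah_xv G n \<gamma> (\<pi> s) x0 v (Suc n)),
          sarah_vtil G n \<gamma> (\<pi> s) x0 v (Suc n)))"

text \<open>Iterates: \<open>sarah_x \<dots> s t = x_s^t\<close>, \<open>sarah_v \<dots> s t = v_s^t\<close>, \<open>sarah_vs \<dots> s = v_s\<close>.\<close>
definition sarah_x where
  "sarah_x G n \<gamma> \<pi> x00 s t =
     fst (sarah_xv G n \<gamma> (\<pi> s) (fst (sarah_start G n \<gamma> \<pi> x00 s)) (snd (sarah_start G n \<gamma> \<pi> x00 s)) t)"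

definition sarah_v where
  "sarah_v G n \<gamma> \<pi> x00 s t =
     snd (sarah_xv G n \<gamma> (\<pi> s) (fst (sarah_start G n \<gamma> \<pi> x00 s)) (snd (sarah_start G n \<gamma> \<pi> x00 s)) t)"

definition sarah_vs where
  "sarah_vs G n \<gamma> \<pi> x00 s = snd (sarah_start G n \<gamma> \<pi> x00 s)"

end

theory Submission
  imports Defs
begin

theorem lemma3:
  fixes f :: "nat \<Rightarrow> 'a::euclidean_space \<Rightarrow> real"
    and G :: "nat \<Rightarrow> 'a \<Rightarrow> 'a"
    and n :: nat and L \<gamma> :: real
    and \<pi> :: "nat \<Rightarrow> nat \<Rightarrow> nat"
    and x00 :: 'a and s :: nat
  assumes n: "n \<ge> 1"
    and \<gamma>: "\<gamma> > 0"
    and smooth: "\<And>i. i \<in> {1..n} \<Longrightarrow> L_smooth (f i) (G i) L"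
    and extra: "(\<exists>\<mu>>0. \<forall>i\<in>{1..n}. strongly_convex \<mu> (f i))
                \<or> bdd_below (range (\<lambda>x. (1 / real n) * (\<Sum>i=1..n. f i x)))"
    and perm: "\<And>s. bij_betw (\<pi> s) {1..n} {1..n}"
  shows "(norm ((1 / real n) *\<^sub>R (\<Sum>i=1..n. G i (sarah_x G n \<gamma> \<pi> x00 s 0))
                - (1 / (real n + 1)) *\<^sub>R (\<Sum>t=0..n. sarah_v G n \<gamma> \<pi> x00 s t)))\<^sup>2
         \<le> 2 * (norm ((1 / real n) *\<^sub>R (\<Sum>i=1..n. G i (sarah_x G n \<gamma> \<pi> x00 s 0))
                      - sarah_vs G n \<gamma> \<pi> x00 s))\<^sup>2
           + 2 * L\<^sup>2 / (real n + 1)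
             * (\<Sum>t=1..n. (norm (sarah_x G n \<gamma> \<pi> x00 s t - sarah_x G n \<gamma> \<pi> x00 s (t - 1)))\<^sup>2)"
proof -
  define x0 where "x0 = fst (sarah_start G n \<gamma> \<pi> x00 s)"
  define v0 where "v0 = snd (sarah_start G n \<gamma> \<pi> x00 s)"
  define p where "p = \<pi> s"
  define X where "X t = sarah_x G n \<gamma> \<pi> x00 s t" for t
  define V where "V t = sarah_v G n \<gamma> \<pi> x00 s t" for t
  have Xe: "X t = fst (sarah_xv G n \<gamma> p x0 v0 t)" for t
    unfolding X_def sarah_x_def x0_def v0_def p_def ..
  have Ve: "V t = snd (sarah_xv G n \<gamma> p x0 v0 t)" for t
    unfolding V_def sarah_v_def x0_def v0_def p_def ..
  have V0: "V 0 = sarah_vs G n \<gamma> \<pi> x00 s"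
    unfolding Ve sarah_vs_def v0_def by simp
  have VS: "V (Suc t) = (1 / real n) *\<^sub>R (G (p (Suc t)) (X (Suc t)) - G (p (Suc t)) (X t)) + V t" for t
    unfolding Ve Xe by (simp add: Let_def)
  define D where "D k = (1 / real n) *\<^sub>R (G (p k) (X k) - G (p k) (X (k - 1)))" for k
  define d where "d k = norm (X k - X (k - 1))" for k
  have Vsum: "V t = V 0 + (\<Sum>k=1..t. D k)" for t
  proof (induction t)
    case 0 then show ?case by simp
  next
    case (Suc t) then show ?case by (simp add: VS D_def)
  qed
  have Dle: "norm (D k) \<le> L / real n * d k" if k: "k \<in> {1..n}" for k
  proof -
    have "p k \<in> {1..n}" using perm[of s] k unfolding p_def bij_betw_def by auto
    then have "norm (G (p k) (X k) - G (p k) (X (k - 1))) \<le> L * d k"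
      using smooth unfolding L_smooth_def d_def by blast
    moreover have "norm (D k) = norm (G (p k) (X k) - G (p k) (X (k - 1))) / real n"
      unfolding D_def by (simp add: divide_simps)
    ultimately show ?thesis using n by (simp add: divide_right_mono)
  qed
  have Lnn: "0 \<le> L / real n * d k" if "k \<in> {1..n}" for k
    using Dle[OF that] norm_ge_zero order_trans by blast
  define g where "g = (1 / real n) *\<^sub>R (\<Sum>i=1..n. G i (X 0))"
  define B where "B = (1 / (real n + 1)) *\<^sub>R (\<Sum>t=0..n. (\<Sum>k=1..t. D k))"
  have avg: "(1 / (real n + 1)) *\<^sub>R (\<Sum>t=0..n. V t) = V 0 + B"
  proof -
    have "(\<Sum>t=0..n. V t) = (\<Sum>t=0..n. V 0) + (\<Sum>t=0..n. (\<Sum>k=1..t. D k))"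
    proof -
      have "(\<Sum>t=0..n. V t) = (\<Sum>t=0..n. V 0 + (\<Sum>k=1..t. D k))"
        by (rule sum.cong) (rule refl, rule Vsum)
      then show ?thesis by (simp only: sum.distrib)
    qed
    also have "(\<Sum>t=0..n. V 0) = (real n + 1) *\<^sub>R V 0"
      unfolding sum_constant_scaleR by (simp add: add.commute)
    finally show ?thesis unfolding B_def by (simp add: scaleR_add_right)
  qed
  define S where "S = (\<Sum>k=1..n. d k)"
  have normB: "norm B \<le> L / (real n + 1) * S"
  proof -
    have "norm (\<Sum>t=0..n. (\<Sum>k=1..t. D k)) \<le> (\<Sum>t=0..n. norm (\<Sum>k=1..t. D k))"
      by (rule norm_sum)
    also have "\<dots> \<le> (\<Sum>t=0..n. (if t = 0 then 0 else L / real n * S))"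
    proof (rule sum_mono)
      fix t assume t: "t \<in> {0..n}"
      show "norm (\<Sum>k=1..t. D k) \<le> (if t = 0 then 0 else L / real n * S)"
      proof (cases "t = 0")
        case True then show ?thesis by simp
      next
        case False
        have "norm (\<Sum>k=1..t. D k) \<le> (\<Sum>k=1..t. norm (D k))" by (rule norm_sum)
        also have "\<dots> \<le> (\<Sum>k=1..t. L / real n * d k)"
          by (rule sum_mono) (use t Dle in auto)
        also have "\<dots> \<le> (\<Sum>k=1..n. L / real n * d k)"
          by (rule sum_mono2) (use t Lnn in auto)
        also have "\<dots> = L / real n * S" unfolding S_def by (simp add: sum_distrib_left)
        finally show ?thesis using False by simp
      qed
    qed
    also have "\<dots> = (\<Sum>t\<in>{1..n}. L / real n * S)"
      by (rule sum.mono_neutral_cong_right) auto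
    also have "\<dots> = L * S" using n by simp
    finally have "norm (\<Sum>t=0..n. (\<Sum>k=1..t. D k)) \<le> L * S" .
    then show ?thesis unfolding B_def
      by (simp add: divide_simps)
  qed
  have LS: "0 \<le> L * S"
  proof -
    have "0 \<le> (\<Sum>k=1..n. L / real n * d k)" by (rule sum_nonneg) (use Lnn in auto)
    also have "\<dots> = L * S / real n" unfolding S_def by (simp add: sum_distrib_left sum_divide_distrib)
    finally show ?thesis using n by (simp add: divide_simps split: if_splits)
  qed
  have B2: "(norm B)\<^sup>2 \<le> L\<^sup>2 / (real n + 1) * (\<Sum>t=1..n. (d t)\<^sup>2)"
  proof -
    have "(norm B)\<^sup>2 \<le> (L / (real n + 1) * S)\<^sup>2"
      using normB by (intro power_mono) auto
    also have "\<dots> = L\<^sup>2 / (real n + 1)^2 * S\<^sup>2" by (simp add: power_divide power_mult_distrib)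
    also have "\<dots> \<le> L\<^sup>2 / (real n + 1)^2 * ((\<Sum>t=1..n. (d t)\<^sup>2) * real n)"
      using sum_squared_le_sum_of_squares[of d "{1..n}"] unfolding S_def
      by (intro mult_left_mono) auto
    also have "\<dots> \<le> L\<^sup>2 / (real n + 1) * (\<Sum>t=1..n. (d t)\<^sup>2)"
    proof -
      have q: "0 \<le> (\<Sum>t=1..n. (d t)\<^sup>2)" by (rule sum_nonneg) auto
      have h: "L\<^sup>2 / (real n + 1)^2 * real n \<le> L\<^sup>2 / (real n + 1)"
        by (simp add: divide_simps power2_eq_square mult_left_mono)
      have e: "L\<^sup>2 / (real n + 1)^2 * ((\<Sum>t=1..n. (d t)\<^sup>2) * real n)
         = (L\<^sup>2 / (real n + 1)^2 * real n) * (\<Sum>t=1..n. (d t)\<^sup>2)" by (simp only: mult_ac)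
      show ?thesis unfolding e by (rule mult_right_mono[OF h q])
    qed
    finally show ?thesis .
  qed
  have tri: "(norm (a - b))\<^sup>2 \<le> 2 * (norm a)\<^sup>2 + 2 * (norm b)\<^sup>2" for a b :: 'a
  proof -
    have "norm (a - b) \<le> norm a + norm b" by (rule norm_triangle_ineq4)
    then have "(norm (a - b))\<^sup>2 \<le> (norm a + norm b)\<^sup>2" by (intro power_mono) auto
    also have "\<dots> \<le> 2 * (norm a)\<^sup>2 + 2 * (norm b)\<^sup>2"
      by (smt (verit) sum_squares_bound power2_sum)
    finally show ?thesis .
  qed
  have "(norm (g - (1 / (real n + 1)) *\<^sub>R (\<Sum>t=0..n. V t)))\<^sup>2 = (norm ((g - V 0) - B))\<^sup>2"
    unfolding avg by (simp add: algebra_simps)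
  also have "\<dots> \<le> 2 * (norm (g - V 0))\<^sup>2 + 2 * (norm B)\<^sup>2" by (rule tri)
  also have "\<dots> \<le> 2 * (norm (g - V 0))\<^sup>2 + 2 * L\<^sup>2 / (real n + 1) * (\<Sum>t=1..n. (d t)\<^sup>2)"
    using B2 by simp
  finally show ?thesis unfolding g_def V0[symmetric] unfolding X_def V_def d_def .
qed

end
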